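(* Let $n\ge1$, $\preceq$ an admissible order on $L([0,1])$, $G\colon L([0,1])^n\to L([0,1])$ non-decreasing and $F\colon L([0,1])^2\to L([0,1])$ non-decreasing in the first variable. Then the IV Sugeno-like $FG$-functional $\mathbf S_m^{F,G}$ is non-decreasing (in each argument, w.r.t. $\preceq$) for every symmetric IV fuzzy measure $m$.
   Context: $N=\{1,\dots,n\}$. $L([0,1])=\{[a,b]:0\le a\le b\le1\}$, $\mathbf0=[0,0]$, $\mathbf1=[1,1]$. An admissible order $\preceq$ is a total order on $L([0,1])$ with $[a,b]\preceq[c,d]$ whenever $a\le c$, $b\le d$. All monotonicity is w.r.t. $\preceq$ (for $G$, in each argument). An IV fuzzy measure w.r.t. $\preceq$ is $m\colon2^N\to L([0,1])$, $m(\emptyset)=\mathbf0$, $m(N)=\mathbf1$, $m(A)\preceq m(B)$ for $A\subseteq B$; symmetric if $m(A)=m(B)$ whenever $|A|=|B|$. For a permutation $\sigma$, $E_{\sigma(i)}=\{\sigma(i),\dots,\sigma(n)\}$. $\mathbf S_m^{F,G}(X_1,\dots,X_n)=G\big(F(X_{\sigma(1)},m(E_{\sigma(1)})),\dots,F(X_{\sigma(n)},m(E_{\sigma(n)}))\big)$ with $\sigma$ any permutation such that $X_{\sigma(1)}\preceq\dots\preceq X_{\sigma(n)}$ (independent of the choice of $\sigma$ for symmetric $m$). *)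

theory Defs
  imports Complex_Main "HOL-Combinatorics.Permutations"
begin

text \<open>Closed subintervals [a,b] of [0,1] are represented by pairs (a,b).\<close>
type_synonym ivl = "real \<times> real"

definition LI :: "ivl set" where
  "LI = {(a, b). 0 \<le> a \<and> a \<le> b \<and> b \<le> 1}"

definition ivl0 :: ivl where "ivl0 = (0, 0)"
definition ivl1 :: ivl where "ivl1 = (1, 1)"

definition admissible_order :: "(ivl \<Rightarrow> ivl \<Rightarrow> bool) \<Rightarrow> bool" where
  "admissible_order le \<longleftrightarrow>
     (\<forall>x\<in>LI. le x x) \<and>
     (\<forall>x\<in>LI. \<forall>y\<in>LI. le x y \<and> le y x \<longrightarrow> x = y) \<and>
     (\<forall>x\<in>LI. \<forall>y\<in>LI. \<forall>z\<in>LI. le x y \<and> le y z \<longrightarrow> le x z) \<and>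
     (\<forall>x\<in>LI. \<forall>y\<in>LI. le x y \<or> le y x) \<and>
     (\<forall>a b c d. (a, b) \<in> LI \<and> (c, d) \<in> LI \<and> a \<le> c \<and> b \<le> d \<longrightarrow> le (a, b) (c, d))"

text \<open>Index set N is {0..<n}; elements of L^n are lists of length n with entries in LI.\<close>
definition IV_fuzzy_measure ::
  "(ivl \<Rightarrow> ivl \<Rightarrow> bool) \<Rightarrow> nat \<Rightarrow> (nat set \<Rightarrow> ivl) \<Rightarrow> bool" where
  "IV_fuzzy_measure le n m \<longleftrightarrow>
     (\<forall>A. A \<subseteq> {..<n} \<longrightarrow> m A \<in> LI) \<and>
     m {} = ivl0 \<and> m {..<n} = ivl1 \<and>
     (\<forall>A B. A \<subseteq> B \<and> B \<subseteq> {..<n} \<longrightarrow> le (m A) (m B))"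

definition symmetric_measure :: "nat \<Rightarrow> (nat set \<Rightarrow> ivl) \<Rightarrow> bool" where
  "symmetric_measure n m \<longleftrightarrow>
     (\<forall>A B. A \<subseteq> {..<n} \<and> B \<subseteq> {..<n} \<and> card A = card B \<longrightarrow> m A = m B)"

definition maps_into_L_n :: "nat \<Rightarrow> (ivl list \<Rightarrow> ivl) \<Rightarrow> bool" where
  "maps_into_L_n n G \<longleftrightarrow>
     (\<forall>xs. length xs = n \<and> set xs \<subseteq> LI \<longrightarrow> G xs \<in> LI)"

definition nondecr_each_arg :: "(ivl \<Rightarrow> ivl \<Rightarrow> bool) \<Rightarrow> nat \<Rightarrow> (ivl list \<Rightarrow> ivl) \<Rightarrow> bool" where
  "nondecr_each_arg le n G \<longleftrightarrow>
     (\<forall>xs i y. length xs = n \<and> set xs \<subseteq> LI \<and> i < n \<and> y \<in> LI \<and> le (xs ! i) y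
        \<longrightarrow> le (G xs) (G (xs[i := y])))"

definition maps_into_L_2 :: "(ivl \<Rightarrow> ivl \<Rightarrow> ivl) \<Rightarrow> bool" where
  "maps_into_L_2 F \<longleftrightarrow> (\<forall>x\<in>LI. \<forall>y\<in>LI. F x y \<in> LI)"

definition nondecr_first :: "(ivl \<Rightarrow> ivl \<Rightarrow> bool) \<Rightarrow> (ivl \<Rightarrow> ivl \<Rightarrow> ivl) \<Rightarrow> bool" where
  "nondecr_first le F \<longleftrightarrow>
     (\<forall>x\<in>LI. \<forall>y\<in>LI. \<forall>z\<in>LI. le x y \<longrightarrow> le (F x z) (F y z))"

definition sorting_perm :: "(ivl \<Rightarrow> ivl \<Rightarrow> bool) \<Rightarrow> ivl list \<Rightarrow> (nat \<Rightarrow> nat) \<Rightarrow> bool" where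
  "sorting_perm le xs \<sigma> \<longleftrightarrow>
     \<sigma> permutes {..<length xs} \<and>
     (\<forall>i j. i \<le> j \<and> j < length xs \<longrightarrow> le (xs ! \<sigma> i) (xs ! \<sigma> j))"

text \<open>IV Sugeno-like FG-functional; E_sigma(i) = sigma ` {i..<n}.\<close>
definition sugeno_FG ::
  "(ivl \<Rightarrow> ivl \<Rightarrow> bool) \<Rightarrow> (ivl \<Rightarrow> ivl \<Rightarrow> ivl) \<Rightarrow> (ivl list \<Rightarrow> ivl) \<Rightarrow> (nat set \<Rightarrow> ivl)
     \<Rightarrow> ivl list \<Rightarrow> ivl" where
  "sugeno_FG le F G m xs =
     (let \<sigma> = (SOME \<sigma>. sorting_perm le xs \<sigma>)
      in G (map (\<lambda>i. F (xs ! \<sigma> i) (m (\<sigma> ` {i..<length xs}))) [0..<length xs]))"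

end

theory Submission
  imports Defs
begin

locale tord =
  fixes le :: "ivl \<Rightarrow> ivl \<Rightarrow> bool"
  assumes rf: "\<And>x. x \<in> LI \<Longrightarrow> le x x"
    and tr: "\<And>x y z. x \<in> LI \<Longrightarrow> y \<in> LI \<Longrightarrow> z \<in> LI \<Longrightarrow> le x y \<Longrightarrow> le y z \<Longrightarrow> le x z"
    and tot: "\<And>x y. x \<in> LI \<Longrightarrow> y \<in> LI \<Longrightarrow> le x y \<or> le y x"
    and asym: "\<And>x y. x \<in> LI \<Longrightarrow> y \<in> LI \<Longrightarrow> le x y \<Longrightarrow> le y x \<Longrightarrow> x = y"
begin

lemma sorting_perm_exists:
  assumes "set xs \<subseteq> LI"
  shows "\<exists>\<sigma>. sorting_perm le xs \<sigma>"
proof -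
  define n where "n = length xs"
  define r where "r j = card {l. l<n \<and> \<not> le (xs!j) (xs!l)}" for j
  define L where "L = sort_key r [0..<n]"
  have len: "length L = n" unfolding L_def by (metis length_sort length_upt minus_nat.diff_0)
  have dist: "distinct L" unfolding L_def by (simp add: distinct_sort)
  have setL: "set L = {..<n}" unfolding L_def by auto
  have srt: "sorted (map r L)" unfolding L_def by (rule sorted_sort_key)
  define \<sigma> where "\<sigma> k = (if k<n then L!k else k)" for k
  have bL: "bij_betw ((!) L) {..<n} {..<n}" using bij_betw_nth[OF dist] len setL by auto
  have "bij_betw \<sigma> {..<n} {..<n}"
    using bL by (rule bij_betw_cong[THEN iffD1, rotated]) (simp add: \<sigma>_def)
  hence perm: "\<sigma> permutes {..<n}" by (rule bij_imp_permutes) (simp add: \<sigma>_def)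
  have inLI: "\<And>j. j < n \<Longrightarrow> xs!j \<in> LI" using assms n_def by auto
  have "le (xs ! \<sigma> i) (xs ! \<sigma> j)" if ij: "i \<le> j" "j < n" for i j
  proof (rule ccontr)
    have Li: "L!i < n" "L!j < n" using ij len setL nth_mem by (metis le_less_trans lessThan_iff)+
    have rr: "r (L!i) \<le> r (L!j)" using sorted_nth_mono[OF srt, of i j] ij len by simp
    define a where "a = xs!(L!i)"
    define b where "b = xs!(L!j)"
    have aL: "a \<in> LI" and bL: "b \<in> LI" using Li inLI a_def b_def by auto
    assume "\<not> le (xs ! \<sigma> i) (xs ! \<sigma> j)"
    hence nab: "\<not> le a b" using ij by (simp add: \<sigma>_def a_def b_def)
    hence ba: "le b a" using tot aL bL by blast
    have "{l. l<n \<and> \<not> le b (xs!l)} \<subset> {l. l<n \<and> \<not> le a (xs!l)}"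
    proof
      show "{l. l<n \<and> \<not> le b (xs!l)} \<subseteq> {l. l<n \<and> \<not> le a (xs!l)}"
        using tr[OF bL aL] inLI ba by blast
      show "{l. l<n \<and> \<not> le b (xs!l)} \<noteq> {l. l<n \<and> \<not> le a (xs!l)}"
        using Li nab rf[OF bL] b_def by blast
    qed
    hence "r (L!j) < r (L!i)" unfolding r_def a_def b_def by (intro psubset_card_mono) auto
    thus False using rr by simp
  qed
  hence "sorting_perm le xs \<sigma>" unfolding sorting_perm_def using perm n_def by simp
  thus ?thesis by blast
qed

lemma order_stat_mono:
  assumes lx: "length xs = n" and ly: "length ys = n"
    and sx: "set xs \<subseteq> LI" and sy: "set ys \<subseteq> LI"
    and pw: "\<And>j. j < n \<Longrightarrow> le (xs!j) (ys!j)"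
    and ps: "sorting_perm le xs \<sigma>" and pt: "sorting_perm le ys \<tau>" and k: "k < n"
  shows "le (xs ! \<sigma> k) (ys ! \<tau> k)"
proof (rule ccontr)
  have sp: "\<sigma> permutes {..<n}" and tp: "\<tau> permutes {..<n}"
    using ps pt lx ly unfolding sorting_perm_def by auto
  have xL: "\<And>j. j < n \<Longrightarrow> xs!j \<in> LI" and yL: "\<And>j. j < n \<Longrightarrow> ys!j \<in> LI"
    using sx sy lx ly by auto
  define a where "a = xs ! \<sigma> k"
  define b where "b = ys ! \<tau> k"
  have aL: "a \<in> LI" using a_def xL permutes_in_image[OF sp] k by auto
  have bL: "b \<in> LI" using b_def yL permutes_in_image[OF tp] k by auto
  assume "\<not> le (xs ! \<sigma> k) (ys ! \<tau> k)"
  hence nab: "\<not> le a b" by (simp add: a_def b_def)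
  have sub: "\<tau> ` {..k} \<subseteq> \<sigma> ` {..<k}"
  proof
    fix j assume "j \<in> \<tau> ` {..k}"
    then obtain l where l: "l \<le> k" "j = \<tau> l" by auto
    have jn: "j < n" using l k permutes_in_image[OF tp] by auto
    have "le (ys!j) b" using pt l k ly unfolding sorting_perm_def b_def by auto
    hence xjb: "le (xs!j) b" using tr[OF xL[OF jn] yL[OF jn] bL, OF pw[OF jn]] by simp
    have naj: "\<not> le a (xs!j)" using tr[OF aL xL[OF jn] bL] xjb nab by auto
    have "j \<in> \<sigma> ` {..<n}" using permutes_image[OF sp] jn by simp
    then obtain p where p: "p < n" "j = \<sigma> p" by auto
    have "p < k"
    proof (rule ccontr)
      assume "\<not> p < k"
      hence "le a (xs!j)" using ps p lx unfolding sorting_perm_def a_def by auto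
      thus False using naj by simp
    qed
    thus "j \<in> \<sigma> ` {..<k}" using p by auto
  qed
  have "card (\<tau> ` {..k}) = Suc k"
    using card_image[OF permutes_inj_on[OF tp]] by simp
  moreover have "card (\<sigma> ` {..<k}) \<le> k" using card_image_le[of "{..<k}" \<sigma>] by simp
  moreover have "card (\<tau> ` {..k}) \<le> card (\<sigma> ` {..<k})" using sub by (intro card_mono) auto
  ultimately show False by simp
qed

lemma G_mono_all:
  assumes G: "nondecr_each_arg le n G" and GL: "maps_into_L_n n G"
    and lu: "length u = n" and lv: "length v = n"
    and su: "set u \<subseteq> LI" and sv: "set v \<subseteq> LI"
    and pw: "\<And>j. j < n \<Longrightarrow> le (u!j) (v!j)"
  shows "le (G u) (G v)"
proof -
  have "j \<le> n \<Longrightarrow> le (G u) (G (take j v @ drop j u))" for j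
  proof (induction j)
    case 0
    show ?case using rf GL su lu unfolding maps_into_L_n_def by simp
  next
    case (Suc j)
    define w where "w = take j v @ drop j u"
    have lw: "length w = n" using Suc.prems lu lv unfolding w_def by simp
    have sw: "set w \<subseteq> LI" unfolding w_def using su sv set_drop_subset[of j u] set_take_subset[of j v]
      by auto
    have jn: "j < n" using Suc.prems by simp
    have wj: "w!j = u!j" using jn lu lv unfolding w_def by (simp add: nth_append)
    have eq: "take (Suc j) v @ drop (Suc j) u = w[j := v!j]"
      using jn lu lv unfolding w_def
      by (simp add: list_eq_iff_nth_eq nth_append nth_list_update)
    have vjL: "v!j \<in> LI" using sv lv jn by auto
    have "le (w ! j) (v ! j)" using pw[OF jn] wj by simp
    hence step: "le (G w) (G (w[j := v!j]))"
      using G lw sw jn vjL unfolding nondecr_each_arg_def by blast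
    have sw2: "set (w[j := v!j]) \<subseteq> LI" using sw vjL by (rule set_update_subsetI)
    have L1: "G (w[j := v!j]) \<in> LI" using GL sw2 lw unfolding maps_into_L_n_def by simp
    have L2: "G u \<in> LI" "G w \<in> LI" using GL lw sw lu su unfolding maps_into_L_n_def by auto
    have IH: "le (G u) (G w)" using Suc.IH jn unfolding w_def by simp
    have "le (G u) (G (w[j := v!j]))" by (rule tr[OF L2 L1 IH step])
    thus ?case using eq by simp
  qed
  from this[of n] show ?thesis using lu lv by simp
qed

end

theorem proposition12:
  fixes n :: nat and le :: "ivl \<Rightarrow> ivl \<Rightarrow> bool"
    and G :: "ivl list \<Rightarrow> ivl" and F :: "ivl \<Rightarrow> ivl \<Rightarrow> ivl" and m :: "nat set \<Rightarrow> ivl"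
  assumes "n \<ge> 1"
    and "admissible_order le"
    and "maps_into_L_n n G" and "nondecr_each_arg le n G"
    and "maps_into_L_2 F" and "nondecr_first le F"
    and "IV_fuzzy_measure le n m" and "symmetric_measure n m"
  shows "nondecr_each_arg le n (sugeno_FG le F G m)"
proof -
  have ao: "(\<forall>x\<in>LI. le x x)" "(\<forall>x\<in>LI. \<forall>y\<in>LI. le x y \<and> le y x \<longrightarrow> x = y)"
     "(\<forall>x\<in>LI. \<forall>y\<in>LI. \<forall>z\<in>LI. le x y \<and> le y z \<longrightarrow> le x z)"
     "(\<forall>x\<in>LI. \<forall>y\<in>LI. le x y \<or> le y x)"
    using assms(2) unfolding admissible_order_def by blast+
  interpret tord le
  proof
    show "\<And>x. x \<in> LI \<Longrightarrow> le x x" using ao(1) by blast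
    show "\<And>x y z. x \<in> LI \<Longrightarrow> y \<in> LI \<Longrightarrow> z \<in> LI \<Longrightarrow> le x y \<Longrightarrow> le y z \<Longrightarrow> le x z"
      using ao(3) by blast
    show "\<And>x y. x \<in> LI \<Longrightarrow> y \<in> LI \<Longrightarrow> le x y \<or> le y x" using ao(4) by blast
    show "\<And>x y. x \<in> LI \<Longrightarrow> y \<in> LI \<Longrightarrow> le x y \<Longrightarrow> le y x \<Longrightarrow> x = y" using ao(2) by blast
  qed
  have red: "sugeno_FG le F G m xs = G (map (\<lambda>k. F (xs ! \<sigma> k) (m {k..<n})) [0..<n])"
    if "length xs = n" "set xs \<subseteq> LI" "sorting_perm le xs \<sigma>" for xs \<sigma>
  proof -
    have "sorting_perm le xs (SOME \<sigma>. sorting_perm le xs \<sigma>)" using that by (metis someI)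
    then obtain s where s: "sorting_perm le xs s" "s = (SOME \<sigma>. sorting_perm le xs \<sigma>)" by blast
    have sp: "s permutes {..<n}" using s that unfolding sorting_perm_def by auto
    have "m (s ` {k..<n}) = m {k..<n}" for k
    proof -
      have "card (s ` {k..<n}) = card {k..<n}" using card_image[OF permutes_inj_on[OF sp]] by simp
      moreover have "s ` {k..<n} \<subseteq> s ` {..<n}" by (rule image_mono) auto
      hence "s ` {k..<n} \<subseteq> {..<n}" using permutes_image[OF sp] by simp
      moreover have "{k..<n} \<subseteq> {..<n}" by auto
      ultimately show ?thesis using assms(8) unfolding symmetric_measure_def by simp
    qed
    moreover have "xs ! s k = xs ! \<sigma> k" if k: "k < n" for k
    proof -
      have sp2: "\<sigma> permutes {..<n}" using \<open>sorting_perm le xs \<sigma>\<close> \<open>length xs = n\<close>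
        unfolding sorting_perm_def by auto
      have L1: "xs ! s k \<in> LI" "xs ! \<sigma> k \<in> LI"
        using permutes_in_image[OF sp] permutes_in_image[OF sp2] k \<open>length xs = n\<close> \<open>set xs \<subseteq> LI\<close>
        by (metis lessThan_iff nth_mem subsetD)+
      have pr: "\<And>j. j < n \<Longrightarrow> le (xs ! j) (xs ! j)"
        using rf \<open>length xs = n\<close> \<open>set xs \<subseteq> LI\<close> by (metis nth_mem subsetD)
      have L2: "le (xs ! s k) (xs ! \<sigma> k)" "le (xs ! \<sigma> k) (xs ! s k)"
        using order_stat_mono[of xs n xs, OF _ _ _ _ _ s(1) \<open>sorting_perm le xs \<sigma>\<close> k]
          order_stat_mono[of xs n xs, OF _ _ _ _ _ \<open>sorting_perm le xs \<sigma>\<close> s(1) k]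
          pr \<open>length xs = n\<close> \<open>set xs \<subseteq> LI\<close> by auto
      show ?thesis using asym[OF L1 L2] .
    qed
    ultimately have "map (\<lambda>i. F (xs ! s i) (m (s ` {i..<length xs}))) [0..<length xs]
        = map (\<lambda>k. F (xs ! \<sigma> k) (m {k..<n})) [0..<n]"
      using that(1) by (intro map_cong) auto
    thus ?thesis unfolding sugeno_FG_def Let_def s(2)[symmetric] by simp
  qed
  show ?thesis unfolding nondecr_each_arg_def
  proof (intro allI impI)
    fix xs i y assume h: "length xs = n \<and> set xs \<subseteq> LI \<and> i < n \<and> y \<in> LI \<and> le (xs ! i) y"
    define ys where "ys = xs[i := y]"
    have ly: "length ys = n" and sy: "set ys \<subseteq> LI" using h ys_def
      by (auto simp: set_update_subsetI)
    obtain \<sigma> where ps: "sorting_perm le xs \<sigma>" using sorting_perm_exists h by blast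
    obtain \<tau> where pt: "sorting_perm le ys \<tau>" using sorting_perm_exists sy by blast
    have sp: "\<sigma> permutes {..<n}" and tp: "\<tau> permutes {..<n}"
      using ps pt h ly unfolding sorting_perm_def by auto
    have pw: "le (xs!j) (ys!j)" if "j < n" for j
    proof (cases "j = i")
      case False
      have "xs ! j \<in> LI" using h that by (metis nth_mem subsetD)
      thus ?thesis using rf False unfolding ys_def by simp
    qed (use h that in \<open>simp add: ys_def\<close>)
    have mL: "m {k..<n} \<in> LI" for k
    proof -
      have "{k..<n} \<subseteq> {..<n}" by auto
      thus ?thesis using assms(7) unfolding IV_fuzzy_measure_def by blast
    qed
    define u where "u = map (\<lambda>k. F (xs ! \<sigma> k) (m {k..<n})) [0..<n]"
    define v where "v = map (\<lambda>k. F (ys ! \<tau> k) (m {k..<n})) [0..<n]"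
    have hl: "length xs = n" and hs: "set xs \<subseteq> LI" using h by auto
    have xsL: "xs ! \<sigma> k \<in> LI" if "k < n" for k
    proof -
      have "\<sigma> k < n" using permutes_in_image[OF sp] that by simp
      hence "xs ! \<sigma> k \<in> set xs" using hl by simp
      thus ?thesis using hs by blast
    qed
    have ysL: "ys ! \<tau> k \<in> LI" if "k < n" for k
    proof -
      have "\<tau> k < n" using permutes_in_image[OF tp] that by simp
      hence "ys ! \<tau> k \<in> set ys" using ly by simp
      thus ?thesis using sy by blast
    qed
    have lu: "length u = n" and lv: "length v = n" unfolding u_def v_def by simp_all
    have un: "u ! k = F (xs ! \<sigma> k) (m {k..<n})" if "k < n" for k
      unfolding u_def using that by simp
    have vn: "v ! k = F (ys ! \<tau> k) (m {k..<n})" if "k < n" for k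
      unfolding v_def using that by simp
    have su: "set u \<subseteq> LI"
    proof
      fix z assume "z \<in> set u"
      then obtain k where "k < n" "z = u ! k" using lu by (metis in_set_conv_nth)
      thus "z \<in> LI" using un xsL mL assms(5) unfolding maps_into_L_2_def by simp
    qed
    have sv: "set v \<subseteq> LI"
    proof
      fix z assume "z \<in> set v"
      then obtain k where "k < n" "z = v ! k" using lv by (metis in_set_conv_nth)
      thus "z \<in> LI" using vn ysL mL assms(5) unfolding maps_into_L_2_def by simp
    qed
    have "le (u!k) (v!k)" if k: "k < n" for k
    proof -
      have "le (xs ! \<sigma> k) (ys ! \<tau> k)"
        by (rule order_stat_mono[OF hl ly hs sy pw ps pt k])
      hence "le (F (xs ! \<sigma> k) (m {k..<n})) (F (ys ! \<tau> k) (m {k..<n}))"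
        using assms(6) xsL[OF k] ysL[OF k] mL unfolding nondecr_first_def by blast
      thus ?thesis using un[OF k] vn[OF k] by simp
    qed
    hence "le (G u) (G v)" by (rule G_mono_all[OF assms(4) assms(3) lu lv su sv])
    moreover have "sugeno_FG le F G m xs = G u" using red[OF hl hs ps] unfolding u_def .
    moreover have "sugeno_FG le F G m (xs[i := y]) = G v"
      using red[OF ly sy pt] unfolding v_def ys_def .
    ultimately show "le (sugeno_FG le F G m xs) (sugeno_FG le F G m (xs[i := y]))" by simp
  qed
qed

end
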